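(* Let $q$ be a prime power, $m\ge 2$, $1\le k\le n-1$, and let $\mathcal{C}\subseteq \mathbb{F}_{q^m}^n$ be a linear MRD code of dimension $k$, written as $\mathcal{C}=\mathrm{rs}[\,I_k\mid X\,]$ with $X\in\mathbb{F}_{q^m}^{k\times(n-k)}$ (its generator matrix in systematic form). Let $0<s<m$ with $\gcd(s,m)=1$. Then $\mathcal{C}$ is a generalized Gabidulin code with parameter $s$ if and only if $\mathrm{rk}(X^{(q^s)}-X) = 1$.
   Context: Fix an $\mathbb{F}_q$-basis $b_1,\dots,b_m$ of $\mathbb{F}_{q^m}$. The rank of $v\in\mathbb{F}_{q^m}^n$ is the rank of the matrix $M\in\mathbb{F}_q^{m\times n}$ with $v_j=\sum_i M_{ij}b_i$, and the rank distance is $d_R(u,v)=\mathrm{rk}(u-v)$. A linear rank-metric code of length $n$ and dimension $k$ is a $k$-dimensional $\mathbb{F}_{q^m}$-subspace of $\mathbb{F}_{q^m}^n$; it is MRD if its minimum rank distance equals $n-k+1$. Every linear MRD code has a unique generator matrix of the form $[\,I_k\mid X\,]$. $\mathrm{rs}(G)$ is the $\mathbb{F}_{q^m}$-row space of $G$. For a matrix $X$, $X^{(q^s)}$ is obtained by raising each entry to the $q^s$-th power. For $s$ coprime to $m$ and $g_1,\dots,g_n\in\mathbb{F}_{q^m}$ linearly independent over $\mathbb{F}_q$, the generalized Gabidulin code with parameter $s$ and dimension $k$ is the row space of the $k\times n$ matrix whose $(i,j)$ entry is $g_j^{q^{s(i-1)}}$, $i=1,\dots,k$. *)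

theory Defs
  imports "Jordan_Normal_Form.DL_Rank"
begin

definition subfield_q :: "nat \<Rightarrow> 'a::{field,finite} set" where
  "subfield_q q = {x. x ^ q = x}"

definition Fq_lin_indep :: "nat \<Rightarrow> (nat \<Rightarrow> 'a::{field,finite}) \<Rightarrow> nat set \<Rightarrow> bool" where
  "Fq_lin_indep q g J \<longleftrightarrow>
     (\<forall>c. (\<forall>j\<in>J. c j \<in> subfield_q q) \<longrightarrow> (\<Sum>j\<in>J. c j * g j) = 0 \<longrightarrow> (\<forall>j\<in>J. c j = 0))"

text \<open>Rank of v over F_q: the rank of its coordinate matrix M (column j = coordinates of v_j
  in a fixed F_q-basis), i.e. the maximal number of F_q-linearly independent columns,
  i.e. the maximal number of F_q-linearly independent entries of v.\<close>
definition rank_q :: "nat \<Rightarrow> 'a::{field,finite} vec \<Rightarrow> nat" where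
  "rank_q q v = Max {card J | J. J \<subseteq> {0..<dim_vec v} \<and> Fq_lin_indep q (\<lambda>j. v $ j) J}"

definition rank_dist :: "nat \<Rightarrow> 'a::{field,finite} vec \<Rightarrow> 'a vec \<Rightarrow> nat" where
  "rank_dist q u v = rank_q q (u - v)"

definition min_rank_dist :: "nat \<Rightarrow> 'a::{field,finite} vec set \<Rightarrow> nat" where
  "min_rank_dist q C = Min {rank_dist q u v | u v. u \<in> C \<and> v \<in> C \<and> u \<noteq> v}"

definition row_space :: "'a::field mat \<Rightarrow> 'a vec set" where
  "row_space G = {vec (dim_col G) (\<lambda>j. \<Sum>i<dim_row G. c i * G $$ (i, j)) | c. True}"

definition sys_gen :: "nat \<Rightarrow> nat \<Rightarrow> 'a::field mat \<Rightarrow> 'a mat" where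
  "sys_gen k n X = mat k n (\<lambda>(i, j). if j < k then (if i = j then 1 else 0) else X $$ (i, j - k))"

definition gab_mat :: "nat \<Rightarrow> nat \<Rightarrow> nat \<Rightarrow> nat \<Rightarrow> (nat \<Rightarrow> 'a::field) \<Rightarrow> 'a mat" where
  "gab_mat q s k n g = mat k n (\<lambda>(i, j). g j ^ (q ^ (s * i)))"

definition is_gen_gabidulin :: "nat \<Rightarrow> nat \<Rightarrow> nat \<Rightarrow> nat \<Rightarrow> 'a::{field,finite} vec set \<Rightarrow> bool" where
  "is_gen_gabidulin q s k n C \<longleftrightarrow>
     (\<exists>g. Fq_lin_indep q g {0..<n} \<and> C = row_space (gab_mat q s k n g))"

definition frob_mat :: "nat \<Rightarrow> 'a::field mat \<Rightarrow> 'a mat" where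
  "frob_mat e X = map_mat (\<lambda>x. x ^ e) X"

end

theory Submission
  imports Defs "HOL-Number_Theory.Residues" "HOL-Computational_Algebra.Primes"
begin

locale GF =
  fixes T :: "'a::{field,finite} itself" and q m s :: nat
  assumes card_F: "card (UNIV :: 'a set) = q ^ m"
    and q_pp: "\<exists>p e. prime p \<and> e \<ge> 1 \<and> q = p ^ e"
    and m2: "m \<ge> 2"
    and s_cop: "coprime s m"
begin

abbreviation Fq :: "'a set" where "Fq \<equiv> subfield_q q"

lemma q_ge2: "q \<ge> 2"
proof -
  obtain p e where "prime p" "e \<ge> 1" "q = p ^ e" using q_pp by blast
  then have "p \<ge> 2" using prime_ge_2_nat by blast
  then have "p ^ 1 \<le> p ^ e" using \<open>e\<ge>1\<close> by (intro power_increasing) auto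
  then show ?thesis using \<open>q = p^e\<close> \<open>p\<ge>2\<close> by simp
qed

lemma q_pos: "q > 0" using q_ge2 by simp

lemma char_eq: "\<exists>e. q = CHAR('a) ^ e \<and> prime CHAR('a)"
proof -
  obtain p e where p: "prime p" "e \<ge> 1" "q = p ^ e" using q_pp by blast
  have cpos: "CHAR('a) > 0" by (rule finite_imp_CHAR_pos) simp
  have cp: "prime CHAR('a)" using prime_CHAR_semidom[OF cpos] .
  have "CHAR('a) dvd card (UNIV :: 'a set)" by (rule CHAR_dvd_CARD)
  then have "CHAR('a) dvd p ^ (e * m)" using card_F p by (simp add: power_mult)
  then have "CHAR('a) dvd p" using cp prime_dvd_power by blast
  then have "CHAR('a) = p" using p(1) cp by (metis prime_nat_iff prime_gt_1_nat less_irrefl)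
  then show ?thesis using p cp by blast
qed

lemma fr_add: "(x + y :: 'a) ^ (q ^ j) = x ^ (q ^ j) + y ^ (q ^ j)"
proof -
  obtain e where e: "q = CHAR('a) ^ e" "prime CHAR('a)" using char_eq by blast
  have "q ^ j = CHAR('a) ^ (e * j)" using e by (simp add: power_mult)
  then show ?thesis using freshmans_dream'[OF e(2)] by blast
qed

lemma qj_pos: "q ^ j > 0" using q_pos by simp

lemma fr_zero[simp]: "(0::'a) ^ (q ^ j) = 0" using qj_pos by (simp add: power_0_left)

lemma fr_neg: "(- x :: 'a) ^ (q ^ j) = - (x ^ (q ^ j))"
proof -
  have "(- x) ^ (q ^ j) + x ^ (q ^ j) = 0" using fr_add[of "-x" x j] by simp
  then show ?thesis by (simp add: eq_neg_iff_add_eq_0)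
qed

lemma fr_diff: "(x - y :: 'a) ^ (q ^ j) = x ^ (q ^ j) - y ^ (q ^ j)"
  using fr_add[of x "-y" j] fr_neg[of y j] by simp

lemma fr_sum: "(sum (f::'b \<Rightarrow> 'a) A) ^ (q ^ j) = (\<Sum>i\<in>A. (f i) ^ (q ^ j))"
  by (induction A rule: infinite_finite_induct) (auto simp: fr_add)

lemma fr_eq0: "((x::'a) ^ (q ^ j) = 0) = (x = 0)" using qj_pos by simp

lemma fr_inj: "((x::'a) ^ (q ^ j) = y ^ (q ^ j)) = (x = y)"
  using fr_diff[of x y j] fr_eq0[of "x - y" j] by (metis eq_iff_diff_eq_0)

lemma pow_card: "(x::'a) ^ card (UNIV :: 'a set) = x"
proof (cases "x = 0")
  case False
  have "x * (\<Prod>y\<in>UNIV-{0}. x * y) = x * x ^ (card (UNIV :: 'a set) - 1) * \<Prod>(UNIV-{0})"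
    by (simp add: prod.distrib mult_ac)
  also have "x * x ^ (card (UNIV :: 'a set) - 1) = x ^ Suc (card (UNIV :: 'a set) - 1)"
    by (subst power_Suc) auto
  also have "Suc (card (UNIV :: 'a set) - 1) = card (UNIV :: 'a set)"
    using finite_UNIV_card_ge_0[where ?'a = 'a] by simp
  also have "(\<Prod>y\<in>UNIV-{0}. x * y) = (\<Prod>y\<in>UNIV-{0}. y)"
    by (rule prod.reindex_bij_witness[of _ "\<lambda>y. y / x" "\<lambda>y. x * y"]) (use False in auto)
  finally show ?thesis
    by simp
qed (use finite_UNIV_card_ge_0[where ?'a = 'a] in auto)

lemma pow_qm: "(x::'a) ^ (q ^ (m * r)) = x"
proof (induction r)
  case (Suc r)
  have "x ^ (q ^ (m * Suc r)) = (x ^ (q ^ (m * r))) ^ (q ^ m)"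
    by (simp add: power_mult[symmetric] power_add mult.commute)
  then show ?case using Suc pow_card card_F by simp
qed simp

lemma fr_fr: "((x::'a) ^ (q ^ i)) ^ (q ^ j) = x ^ (q ^ (i + j))"
  by (simp add: power_mult[symmetric] power_add)

lemma Fq_iff: "(x \<in> Fq) = (x ^ q = x)" by (simp add: subfield_q_def)

lemma Fq_pow: "x \<in> Fq \<Longrightarrow> x ^ (q ^ j) = x"
proof (induction j)
  case (Suc j)
  have "x ^ (q ^ Suc j) = (x ^ q) ^ (q ^ j)" by (simp add: power_mult)
  then show ?case using Suc by (simp add: Fq_iff)
qed simp

lemma Fq_0[simp]: "0 \<in> Fq" using q_pos by (simp add: Fq_iff)
lemma Fq_1[simp]: "1 \<in> Fq" by (simp add: Fq_iff)
lemma Fq_add: "x \<in> Fq \<Longrightarrow> y \<in> Fq \<Longrightarrow> x + y \<in> Fq"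
  using fr_add[of x y 1] by (simp add: Fq_iff)
lemma Fq_neg: "x \<in> Fq \<Longrightarrow> - x \<in> Fq"
  using fr_neg[of x 1] by (simp add: Fq_iff)
lemma Fq_diff: "x \<in> Fq \<Longrightarrow> y \<in> Fq \<Longrightarrow> x - y \<in> Fq"
  using fr_diff[of x y 1] by (simp add: Fq_iff)
lemma Fq_mult: "x \<in> Fq \<Longrightarrow> y \<in> Fq \<Longrightarrow> x * y \<in> Fq"
  by (simp add: Fq_iff power_mult_distrib)
lemma Fq_div: "x \<in> Fq \<Longrightarrow> y \<in> Fq \<Longrightarrow> x / y \<in> Fq"
  by (simp add: Fq_iff power_divide)
lemma Fq_sum: "(\<And>i. i \<in> A \<Longrightarrow> f i \<in> Fq) \<Longrightarrow> sum f A \<in> Fq"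
  by (induction A rule: infinite_finite_induct) (auto intro: Fq_add)

lemma fixed_Fq: assumes "(x::'a) ^ (q ^ s) = x" shows "x \<in> Fq"
proof -
  have s0: "s \<noteq> 0"
  proof
    assume "s = 0" with s_cop have "m = 1" by simp
    with m2 show False by simp
  qed
  obtain a b where ab: "s * a = m * b + gcd s m" using bezout_nat[OF s0] by blast
  then have ab': "s * a = m * b + 1" using s_cop by simp
  have iter: "x ^ (q ^ (s * r)) = x" for r
  proof (induction r)
    case (Suc r)
    have "x ^ (q ^ (s * Suc r)) = (x ^ (q ^ (s * r))) ^ (q ^ s)"
      by (simp add: power_mult[symmetric] power_add mult.commute)
    then show ?case using Suc assms by simp
  qed simp
  have "x = x ^ (q ^ (s * a))" using iter by simp
  also have "\<dots> = (x ^ (q ^ (m * b))) ^ q" using ab' by (simp add: power_add power_mult[symmetric] mult.commute)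
  also have "\<dots> = x ^ q" using pow_qm by simp
  finally show ?thesis by (simp add: Fq_iff)
qed

lemma Fq_finite: "finite Fq" by simp
lemma Fq_card: "card Fq \<ge> 2"
proof -
  have "{0, 1} \<subseteq> Fq" by simp
  then have "card {0::'a, 1} \<le> card Fq" by (intro card_mono) auto
  then show ?thesis by simp
qed

end

lemma rank_q_le_dim: "rank_q q v \<le> dim_vec v"
proof -
  let ?S = "{card J |J. J \<subseteq> {0..<dim_vec v} \<and> Fq_lin_indep q (\<lambda>j. v $ j) J}"
  have fin: "finite ?S"
    by (rule finite_subset[of _ "card ` Pow {0..<dim_vec v}"]) auto
  have ne: "?S \<noteq> {}" by (auto simp: Fq_lin_indep_def intro!: exI[of _ "{}"])
  have "\<forall>a\<in>?S. a \<le> dim_vec v"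
  proof
    fix a assume "a \<in> ?S"
    then obtain J where "a = card J" "J \<subseteq> {0..<dim_vec v}" by blast
    then show "a \<le> dim_vec v" using card_mono[of "{0..<dim_vec v}" J] by simp
  qed
  then show ?thesis unfolding rank_q_def using Max_le_iff[OF fin ne] by blast
qed

lemma mrd_lb:
  assumes "min_rank_dist q C = d" "v \<in> C" "w \<in> C" "v \<noteq> w" "C \<subseteq> carrier_vec n"
  shows "d \<le> rank_q q (v - w)"
proof -
  let ?S = "{rank_dist q u v |u v. u \<in> C \<and> v \<in> C \<and> u \<noteq> v}"
  have "?S \<subseteq> {0..n}"
  proof
    fix x assume "x \<in> ?S"
    then obtain u u' where "x = rank_q q (u - u')" "u \<in> C" "u' \<in> C" by (auto simp: rank_dist_def)
    then have "x \<le> dim_vec (u - u')" by (simp only: rank_q_le_dim)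
    also have "\<dots> = n" using \<open>u' \<in> C\<close> assms(5) by auto
    finally show "x \<in> {0..n}" by simp
  qed
  then have "finite ?S" using finite_subset by blast
  moreover have "rank_dist q v w \<in> ?S" using assms by blast
  ultimately have "Min ?S \<le> rank_dist q v w" by (rule Min_le)
  then show ?thesis using assms(1) by (simp add: min_rank_dist_def rank_dist_def)
qed

lemma indepD: "Fq_lin_indep q b J \<Longrightarrow> (\<And>j. j\<in>J \<Longrightarrow> c j \<in> subfield_q q) \<Longrightarrow>
   (\<Sum>j\<in>J. c j * b j) = 0 \<Longrightarrow> j \<in> J \<Longrightarrow> c j = 0"
  by (simp add: Fq_lin_indep_def)

context GF begin

lemma indep_subset:
  fixes b :: "nat \<Rightarrow> 'a"
  assumes "Fq_lin_indep q b J" "J' \<subseteq> J" "finite J"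
  shows "Fq_lin_indep q b J'"
  unfolding Fq_lin_indep_def
proof (intro allI impI)
  fix c assume c: "\<forall>j\<in>J'. c j \<in> subfield_q q" and s: "(\<Sum>j\<in>J'. c j * b j) = 0"
  define c' where "c' j = (if j \<in> J' then c j else 0)" for j
  have "(\<Sum>j\<in>J. c' j * b j) = (\<Sum>j\<in>J'. c' j * b j)"
    using assms(2,3) by (intro sum.mono_neutral_right) (auto simp: c'_def)
  also have "\<dots> = 0" using s by (simp add: c'_def)
  finally have z: "(\<Sum>j\<in>J. c' j * b j) = 0" .
  have cc: "\<And>j. j \<in> J \<Longrightarrow> c' j \<in> subfield_q q" using c Fq_0 by (auto simp: c'_def)
  have "c' j = 0" if "j \<in> J" for j using indepD[OF assms(1), of c' j, OF cc z that] .
  then have "\<forall>j\<in>J. c' j = 0" by blast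
  show "\<forall>j\<in>J'. c j = 0"
  proof
    fix j assume "j \<in> J'"
    with assms(2) \<open>\<forall>j\<in>J. c' j = 0\<close> have "c' j = 0" by blast
    then show "c j = 0" using \<open>j \<in> J'\<close> by (simp add: c'_def)
  qed
qed


definition spanq :: "'a set \<Rightarrow> 'a set" where
  "spanq B = {\<Sum>b\<in>B. d b * b | d. \<forall>b\<in>B. d b \<in> Fq}"

lemma card_indep_le:
  assumes B: "finite B" and J: "finite J" and ind: "Fq_lin_indep q u J"
    and sp: "\<And>j. j \<in> J \<Longrightarrow> u j \<in> spanq B"
  shows "card J \<le> card B"
proof -
  let ?P = "PiE J (\<lambda>_. Fq)"
  let ?Q = "PiE B (\<lambda>_. Fq)"
  define \<Phi> where "\<Phi> c = (\<Sum>j\<in>J. c j * u j)" for c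
  define \<Psi> where "\<Psi> d = (\<Sum>b\<in>B. d b * b)" for d
  have inj: "inj_on \<Phi> ?P"
  proof (rule inj_onI)
    fix c c' assume c: "c \<in> ?P" and c': "c' \<in> ?P" and e: "\<Phi> c = \<Phi> c'"
    have "(\<Sum>j\<in>J. (c j - c' j) * u j) = \<Phi> c - \<Phi> c'"
      by (simp add: \<Phi>_def left_diff_distrib sum_subtractf)
    then have "(\<Sum>j\<in>J. (c j - c' j) * u j) = 0" using e by simp
    moreover have "\<forall>j\<in>J. c j - c' j \<in> Fq" using c c' by (auto intro: Fq_diff)
    ultimately have "c j - c' j = 0" if "j \<in> J" for j
      using indepD[OF ind, of "\<lambda>j. c j - c' j"] that by blast
    then have "\<forall>j\<in>J. c j - c' j = 0" by blast
    then show "c = c'" using c c' by (intro PiE_ext) auto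
  qed
  have "\<forall>j\<in>J. \<exists>d. (\<forall>b\<in>B. d b \<in> Fq) \<and> u j = (\<Sum>b\<in>B. d b * b)"
  proof
    fix j assume "j \<in> J" then have "u j \<in> spanq B" by (rule sp)
    then show "\<exists>d. (\<forall>b\<in>B. d b \<in> Fq) \<and> u j = (\<Sum>b\<in>B. d b * b)" unfolding spanq_def by blast
  qed
  from bchoice[OF this] obtain D where D: "\<forall>j\<in>J. (\<forall>b\<in>B. D j b \<in> Fq) \<and> u j = (\<Sum>b\<in>B. D j b * b)"
    by blast
  have sub1: "\<Phi> ` ?P \<subseteq> \<Psi> ` ?Q"
  proof
    fix x assume "x \<in> \<Phi> ` ?P"
    then obtain c where c: "c \<in> ?P" "x = \<Phi> c" by blast
    define d where "d b = (if b \<in> B then (\<Sum>j\<in>J. c j * D j b) else undefined)" for b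
    have "d \<in> ?Q" using c D by (auto simp: d_def intro!: Fq_sum Fq_mult)
    moreover have "x = \<Psi> d"
    proof -
      have "x = (\<Sum>j\<in>J. c j * (\<Sum>b\<in>B. D j b * b))" unfolding c(2) \<Phi>_def using D by (intro sum.cong) auto
      also have "\<dots> = (\<Sum>j\<in>J. \<Sum>b\<in>B. c j * D j b * b)" by (simp add: sum_distrib_left mult.assoc)
      also have "\<dots> = (\<Sum>b\<in>B. \<Sum>j\<in>J. c j * D j b * b)" by (rule sum.swap)
      also have "\<dots> = (\<Sum>b\<in>B. (\<Sum>j\<in>J. c j * D j b) * b)" by (simp add: sum_distrib_right)
      also have "\<dots> = \<Psi> d" by (simp add: \<Psi>_def d_def)
      finally show ?thesis .
    qed
    ultimately show "x \<in> \<Psi> ` ?Q" by blast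
  qed
  have fQ: "finite ?Q" by (rule finite_PiE) (use B in auto)
  have c1: "card ?P = card Fq ^ card J" using J by (simp add: card_PiE)
  have c2: "card ?Q = card Fq ^ card B" using B by (simp add: card_PiE)
  have "card (\<Phi> ` ?P) = card ?P" using inj by (rule card_image)
  moreover have "card (\<Phi> ` ?P) \<le> card (\<Psi> ` ?Q)" using sub1 fQ by (intro card_mono) auto
  moreover have "card (\<Psi> ` ?Q) \<le> card ?Q" using fQ by (rule card_image_le)
  ultimately have le: "card Fq ^ card J \<le> card Fq ^ card B" using c1 c2 by linarith
  have "1 < card Fq" using Fq_card by simp
  from power_le_imp_le_exp[OF this le] show ?thesis .
qed

lemma rank_q_le:
  assumes B: "finite B" and sp: "\<And>j. j < dim_vec v \<Longrightarrow> v $ j \<in> spanq B"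
  shows "rank_q q v \<le> card B"
proof -
  let ?S = "{card J |J. J \<subseteq> {0..<dim_vec v} \<and> Fq_lin_indep q (\<lambda>j. v $ j) J}"
  have fin: "finite ?S"
    by (rule finite_subset[of _ "card ` Pow {0..<dim_vec v}"]) auto
  have ne: "?S \<noteq> {}" by (auto simp: Fq_lin_indep_def intro!: exI[of _ "{}"])
  have "\<forall>a\<in>?S. a \<le> card B"
  proof
    fix a assume "a \<in> ?S"
    then obtain J where J: "a = card J" "J \<subseteq> {0..<dim_vec v}" "Fq_lin_indep q (\<lambda>j. v $ j) J" by blast
    have "finite J" using J(2) finite_subset by blast
    have "\<And>j. j \<in> J \<Longrightarrow> v $ j \<in> spanq B" using J(2) sp by auto
    from card_indep_le[OF B \<open>finite J\<close> J(3) this] show "a \<le> card B" using J(1) by simp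
  qed
  then show ?thesis unfolding rank_q_def using Max_le_iff[OF fin ne] by blast
qed

definition th :: "nat \<Rightarrow> 'a \<Rightarrow> 'a" where "th i x = x ^ (q ^ (s * i))"

lemma th_add: "th i (x + y) = th i x + th i y" by (simp add: th_def fr_add)
lemma th_diff: "th i (x - y) = th i x - th i y" by (simp add: th_def fr_diff)
lemma th_mult: "th i (x * y) = th i x * th i y" by (simp add: th_def power_mult_distrib)
lemma th_sum: "th i (sum f A) = (\<Sum>j\<in>A. th i (f j))" by (simp add: th_def fr_sum)
lemma th_0[simp]: "th 0 x = x" by (simp add: th_def)
lemma th_zero[simp]: "th i 0 = 0" by (simp add: th_def)
lemma th_one[simp]: "th i 1 = 1" by (simp add: th_def)
lemma th_eq0[simp]: "(th i x = 0) = (x = 0)" using q_pos by (simp add: th_def)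
lemma th_th: "th i (th j x) = th (i + j) x"
  by (simp add: th_def fr_fr algebra_simps)
lemma th_Fq: "c \<in> Fq \<Longrightarrow> th i c = c" by (simp add: th_def Fq_pow)
lemma th_fixed: "th 1 x = x \<Longrightarrow> x \<in> Fq" using fixed_Fq by (simp add: th_def)
lemma th_inv: "th i (x ^ (q ^ (s * i * (m - 1)))) = x"
proof -
  have "th i (x ^ (q ^ (s * i * (m - 1)))) = x ^ (q ^ (s * i * (m - 1) + s * i))"
    by (simp add: th_def fr_fr)
  also have "s * i * (m - 1) + s * i = m * (s * i)" using m2 by (cases m) (auto simp: algebra_simps)
  finally show ?thesis using pow_qm by simp
qed

lemma moore:
  "finite K \<Longrightarrow> Fq_lin_indep q b K \<Longrightarrow> card K \<le> t \<Longrightarrow>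
   (\<forall>i<t. (\<Sum>j\<in>K. y j * th i (b j)) = 0) \<Longrightarrow> \<forall>j\<in>K. y j = 0"
proof (induction t arbitrary: K b y)
  case 0
  then show ?case by simp
next
  case (Suc t)
  show ?case
  proof (rule ccontr)
    assume "\<not> (\<forall>j\<in>K. y j = 0)"
    then obtain j0 where j0: "j0 \<in> K" "y j0 \<noteq> 0" by blast
    define y' where "y' j = y j / y j0" for j
    have y'1: "y' j0 = 1" using j0 by (simp add: y'_def)
    have eq': "(\<Sum>j\<in>K. y' j * th i (b j)) = 0" if "i < Suc t" for i
    proof -
      have "(\<Sum>j\<in>K. y' j * th i (b j)) = (\<Sum>j\<in>K. y j * th i (b j)) / y j0"
        by (simp add: y'_def sum_divide_distrib)
      then show ?thesis using Suc.prems(4) that by simp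
    qed
    define w where "w j = y' j - th 1 (y' j)" for j
    define b' where "b' j = th 1 (b j)" for j
    let ?K = "K - {j0}"
    have w0: "w j0 = 0" using y'1 by (simp add: w_def)
    have eqw: "(\<Sum>j\<in>?K. w j * th i (b' j)) = 0" if "i < t" for i
    proof -
      have "(\<Sum>j\<in>?K. w j * th i (b' j)) = (\<Sum>j\<in>K. w j * th i (b' j))"
        using Suc.prems(1) j0 w0 by (intro sum.mono_neutral_left) auto
      also have "\<dots> = (\<Sum>j\<in>K. y' j * th (Suc i) (b j) - th 1 (y' j * th i (b j)))"
        by (intro sum.cong) (simp_all add: w_def b'_def th_th th_mult left_diff_distrib)
      also have "\<dots> = (\<Sum>j\<in>K. y' j * th (Suc i) (b j)) - th 1 (\<Sum>j\<in>K. y' j * th i (b j))"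
        by (simp add: sum_subtractf th_sum)
      also have "\<dots> = 0" using eq'[of "Suc i"] eq'[of i] that by simp
      finally show ?thesis .
    qed
    have indK: "Fq_lin_indep q b ?K" using indep_subset[OF Suc.prems(2)] Suc.prems(1) by blast
    have indK': "Fq_lin_indep q b' ?K"
      unfolding Fq_lin_indep_def
    proof (intro allI impI)
      fix c assume c: "\<forall>j\<in>?K. c j \<in> subfield_q q" and z: "(\<Sum>j\<in>?K. c j * b' j) = 0"
      have "th 1 (\<Sum>j\<in>?K. c j * b j) = (\<Sum>j\<in>?K. c j * b' j)"
        using c by (simp add: th_sum th_mult b'_def th_Fq)
      then have "(\<Sum>j\<in>?K. c j * b j) = 0" using z by simp
      then show "\<forall>j\<in>?K. c j = 0" using indK c unfolding Fq_lin_indep_def by blast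
    qed
    have cK: "card ?K \<le> t" using Suc.prems(3) j0 Suc.prems(1) by simp
    have "\<forall>j\<in>?K. w j = 0"
      using Suc.IH[OF _ indK' cK] Suc.prems(1) eqw by blast
    then have "\<forall>j\<in>K. y' j \<in> Fq"
    proof (intro ballI)
      fix j assume a: "\<forall>j\<in>?K. w j = 0" and j: "j \<in> K"
      show "y' j \<in> Fq"
      proof (cases "j = j0")
        case True then show ?thesis using y'1 by simp
      next
        case False
        then have "th 1 (y' j) = y' j" using a j by (simp add: w_def)
        then show ?thesis by (rule th_fixed)
      qed
    qed
    moreover have "(\<Sum>j\<in>K. y' j * b j) = 0" using eq'[of 0] by simp
    ultimately have "\<forall>j\<in>K. y' j = 0" using Suc.prems(2) unfolding Fq_lin_indep_def by blast
    then show False using y'1 j0 by simp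
  qed
qed

end

definition smat :: "nat \<Rightarrow> (nat \<Rightarrow> nat \<Rightarrow> 'a) \<Rightarrow> 'a mat" where
  "smat t M = mat t t (\<lambda>(i, p). M i p)"

lemma smat_carrier: "smat t M \<in> carrier_mat t t" by (simp add: smat_def)

lemma smat_mulvec: "i < t \<Longrightarrow> v \<in> carrier_vec t \<Longrightarrow>
   (smat t M *\<^sub>v v) $ i = (\<Sum>p<t. M i p * v $ p)"
  by (simp add: smat_def scalar_prod_def row_def atLeast0LessThan)

lemma det_smat_zero_iff:
  fixes M :: "nat \<Rightarrow> nat \<Rightarrow> 'a::field"
  shows "det (smat t M) = 0 \<longleftrightarrow> (\<exists>y. (\<exists>p<t. y p \<noteq> 0) \<and> (\<forall>i<t. (\<Sum>p<t. M i p * y p) = 0))"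
proof
  assume "det (smat t M) = 0"
  then obtain v where v: "v \<in> carrier_vec t" "v \<noteq> 0\<^sub>v t" "smat t M *\<^sub>v v = 0\<^sub>v t"
    using det_0_iff_vec_prod_zero[OF smat_carrier] by blast
  have "\<exists>p<t. v $ p \<noteq> 0"
  proof (rule ccontr)
    assume "\<not> ?thesis"
    then have "v = 0\<^sub>v t" using v(1) by (intro eq_vecI) auto
    then show False using v(2) by simp
  qed
  moreover have "\<forall>i<t. (\<Sum>p<t. M i p * v $ p) = 0"
  proof (intro allI impI)
    fix i assume i: "i < t"
    have "(smat t M *\<^sub>v v) $ i = 0" using v(3) i by simp
    then show "(\<Sum>p<t. M i p * v $ p) = 0" using smat_mulvec[OF i v(1)] by simp
  qed
  ultimately show "\<exists>y. (\<exists>p<t. y p \<noteq> 0) \<and> (\<forall>i<t. (\<Sum>p<t. M i p * y p) = 0)" by blast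
next
  assume "\<exists>y. (\<exists>p<t. y p \<noteq> 0) \<and> (\<forall>i<t. (\<Sum>p<t. M i p * y p) = 0)"
  then obtain y where y: "\<exists>p<t. y p \<noteq> 0" "\<forall>i<t. (\<Sum>p<t. M i p * y p) = 0" by blast
  define v where "v = vec t y"
  have vc: "v \<in> carrier_vec t" by (simp add: v_def)
  obtain p0 where p0: "p0 < t" "y p0 \<noteq> 0" using y(1) by blast
  have "v $ p0 \<noteq> 0\<^sub>v t $ p0" using p0 by (simp add: v_def)
  then have "v \<noteq> 0\<^sub>v t" by metis
  moreover have "smat t M *\<^sub>v v = 0\<^sub>v t"
  proof (rule eq_vecI)
    fix i assume "i < dim_vec (0\<^sub>v t :: 'a vec)"
    then have i: "i < t" by simp
    have "(smat t M *\<^sub>v v) $ i = (\<Sum>p<t. M i p * v $ p)" using smat_mulvec[OF i vc] .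
    also have "\<dots> = (\<Sum>p<t. M i p * y p)" by (intro sum.cong) (auto simp: v_def)
    finally show "(smat t M *\<^sub>v v) $ i = 0\<^sub>v t $ i" using y(2) i by simp
  qed (simp add: smat_def)
  ultimately show "det (smat t M) = 0"
    using det_0_iff_vec_prod_zero[OF smat_carrier] vc by blast
qed

lemma det_smat_transpose: "det (smat t (\<lambda>i p. M p i)) = det (smat t M)"
proof -
  have "smat t (\<lambda>i p. M p i) = transpose_mat (smat t M)"
    by (intro eq_matI) (auto simp: smat_def)
  then show ?thesis using det_transpose[OF smat_carrier] by simp
qed

lemma kernel_exists:
  fixes M :: "nat \<Rightarrow> nat \<Rightarrow> 'a::field"
  assumes i0: "i0 < t" and z: "\<And>p. p < t \<Longrightarrow> M i0 p = 0"
  shows "\<exists>y. (\<exists>p<t. y p \<noteq> 0) \<and> (\<forall>i<t. (\<Sum>p<t. M i p * y p) = 0)"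
proof -
  have "smat t M = mat\<^sub>r t t (\<lambda>i. if i = i0 then 0\<^sub>v t else vec t (M i))"
    using z by (intro eq_matI) (auto simp: smat_def)
  moreover have "det (mat\<^sub>r t t (\<lambda>i. if i = i0 then 0\<^sub>v t else vec t (M i))) = 0"
    by (rule det_row_0[OF i0]) auto
  ultimately show ?thesis using det_smat_zero_iff by metis
qed

lemma solve_exists:
  fixes M :: "nat \<Rightarrow> nat \<Rightarrow> 'a::field"
  assumes d: "det (smat t M) \<noteq> 0"
  shows "\<exists>y. \<forall>i<t. (\<Sum>p<t. M i p * y p) = w i"
proof -
  have "smat t M \<in> Units (ring_mat TYPE('a) t undefined)"
    by (rule det_non_zero_imp_unit[OF smat_carrier d])
  then obtain B where B: "B \<in> carrier_mat t t" "smat t M * B = 1\<^sub>m t"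
    unfolding Units_def by (auto simp: ring_mat_simps)
  define v where "v = B *\<^sub>v vec t w"
  have vc: "v \<in> carrier_vec t" using B(1) by (simp add: v_def)
  have "smat t M *\<^sub>v v = vec t w"
    unfolding v_def using B by (simp flip: assoc_mult_mat_vec[OF smat_carrier B(1)])
  then have "\<forall>i<t. (\<Sum>p<t. M i p * v $ p) = w i"
    using smat_mulvec[OF _ vc] by (metis index_vec)
  then show ?thesis by blast
qed

context GF begin

lemma span_image:
  fixes w :: "nat \<Rightarrow> 'a"
  assumes L: "finite L" and lam: "\<And>l. l \<in> L \<Longrightarrow> lam l \<in> Fq"
  shows "(\<Sum>l\<in>L. lam l * w l) \<in> spanq (w ` L)"
proof -
  have "(\<Sum>l\<in>L. lam l * w l) = (\<Sum>b\<in>w ` L. (\<Sum>l\<in>{x. x \<in> L \<and> w x = b}. lam l * w l))"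
    by (rule sum.image_gen[OF L])
  also have "\<dots> = (\<Sum>b\<in>w ` L. (\<Sum>l\<in>{x. x \<in> L \<and> w x = b}. lam l) * b)"
    by (intro sum.cong refl) (auto simp: sum_distrib_right)
  finally show ?thesis unfolding spanq_def
    using lam by (auto intro!: exI[of _ "\<lambda>b. (\<Sum>l\<in>{x. x \<in> L \<and> w x = b}. lam l)"] Fq_sum)
qed

lemma th_comb: "(\<And>l. l \<in> L \<Longrightarrow> lam l \<in> Fq) \<Longrightarrow>
   th i (\<Sum>l\<in>L. lam l * w l) = (\<Sum>l\<in>L. lam l * th i (w l))"
  by (simp add: th_sum th_mult th_Fq)

end

locale CODE = GF T q m s for T :: "'a::{field,finite} itself" and q m s :: nat +
  fixes k n :: nat and X :: "'a::{field,finite} mat"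
  assumes k1: "1 \<le> k" and kn: "k \<le> n - 1"
    and X_dim: "X \<in> carrier_mat k (n - k)"
    and MRD: "min_rank_dist q (row_space (sys_gen k n X)) = n - k + 1"
begin

lemma nk: "k < n" using k1 kn by simp

definition cw :: "(nat \<Rightarrow> 'a) \<Rightarrow> 'a vec" where
  "cw a = vec n (\<lambda>j. if j < k then a j else (\<Sum>l<k. a l * X $$ (l, j - k)))"

lemma cw_carrier[simp]: "cw a \<in> carrier_vec n" by (simp add: cw_def)
lemma cw_dim[simp]: "dim_vec (cw a) = n" by (simp add: cw_def)
lemma cw_index: "j < n \<Longrightarrow> cw a $ j = (if j < k then a j else (\<Sum>l<k. a l * X $$ (l, j - k)))"
  by (simp add: cw_def)

lemma C_eq: "row_space (sys_gen k n X) = range cw"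
proof -
  have "vec n (\<lambda>j. \<Sum>i<k. c i * sys_gen k n X $$ (i, j)) = cw c" for c
  proof (rule eq_vecI)
    fix j assume "j < dim_vec (cw c)"
    then have j: "j < n" by simp
    show "vec n (\<lambda>j. \<Sum>i<k. c i * sys_gen k n X $$ (i, j)) $ j = cw c $ j"
    proof (cases "j < k")
      case True
      have "(\<Sum>i<k. c i * sys_gen k n X $$ (i, j)) = (\<Sum>i<k. if i = j then c i else 0)"
        using j True by (intro sum.cong) (auto simp: sys_gen_def)
      also have "\<dots> = c j" using True by (simp add: sum.delta)
      finally show ?thesis using j True by (simp add: cw_def)
    next
      case False
      have "(\<Sum>i<k. c i * sys_gen k n X $$ (i, j)) = (\<Sum>l<k. c l * X $$ (l, j - k))"
        using j False by (intro sum.cong) (auto simp: sys_gen_def)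
      then show ?thesis using j False by (simp add: cw_def)
    qed
  qed simp
  then show ?thesis unfolding row_space_def by (auto simp: sys_gen_def)
qed

lemma zero_in: "0\<^sub>v n = cw (\<lambda>_. 0)"
  by (intro eq_vecI) (auto simp: cw_def)

lemma mrd_cw: assumes "v = cw a" "v \<noteq> 0\<^sub>v n" shows "n - k + 1 \<le> rank_q q v"
proof -
  have "v \<in> row_space (sys_gen k n X)" "0\<^sub>v n \<in> row_space (sys_gen k n X)"
    using assms(1) zero_in C_eq by auto
  moreover have "row_space (sys_gen k n X) \<subseteq> carrier_vec n" using C_eq by auto
  ultimately have "n - k + 1 \<le> rank_q q (v - 0\<^sub>v n)"
    using mrd_lb[OF MRD] assms(2) by blast
  moreover have "v - 0\<^sub>v n = v" using assms(1) by simp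
  ultimately show ?thesis by simp
qed

lemma cw_comb:
  assumes "\<And>i. i \<in> I \<Longrightarrow> \<forall>j<n. w i j = cw (B i) $ j" "finite I"
  shows "\<forall>j<n. (\<Sum>i\<in>I. u i * w i j) = cw (\<lambda>l. \<Sum>i\<in>I. u i * B i l) $ j"
proof (intro allI impI)
  fix j assume j: "j < n"
  have "(\<Sum>i\<in>I. u i * w i j) = (\<Sum>i\<in>I. u i * cw (B i) $ j)" using assms j by simp
  also have "\<dots> = cw (\<lambda>l. \<Sum>i\<in>I. u i * B i l) $ j"
  proof (cases "j < k")
    case True then show ?thesis using j by (simp add: cw_index)
  next
    case False
    have "(\<Sum>i\<in>I. u i * cw (B i) $ j) = (\<Sum>i\<in>I. \<Sum>l<k. u i * B i l * X $$ (l, j - k))"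
      using j False by (simp add: cw_index sum_distrib_left mult.assoc)
    also have "\<dots> = (\<Sum>l<k. \<Sum>i\<in>I. u i * B i l * X $$ (l, j - k))" by (rule sum.swap)
    also have "\<dots> = cw (\<lambda>l. \<Sum>i\<in>I. u i * B i l) $ j"
      using j False by (simp add: cw_index sum_distrib_right)
    finally show ?thesis .
  qed
  finally show "(\<Sum>i\<in>I. u i * w i j) = cw (\<lambda>l. \<Sum>i\<in>I. u i * B i l) $ j" .
qed

end

context CODE begin

lemma moore_indep:
  assumes rows: "\<And>i. i < k \<Longrightarrow> \<forall>j<n. th i (g j) = cw (B i) $ j"
    and gnz: "\<exists>j<n. g j \<noteq> 0"
  shows "Fq_lin_indep q g {0..<n}"
proof (rule ccontr)
  assume nind: "\<not> Fq_lin_indep q g {0..<n}"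
  define S where "S = {J. J \<subseteq> {0..<n} \<and> Fq_lin_indep q g J}"
  have finS: "finite S" unfolding S_def by (rule finite_subset[of _ "Pow {0..<n}"]) auto
  have eS: "{} \<in> S" by (simp add: S_def Fq_lin_indep_def)
  define r where "r = Max (card ` S)"
  have "r \<in> card ` S" unfolding r_def using finS eS by (intro Max_in) auto
  then obtain J where J: "J \<in> S" "card J = r" by blast
  have rmax: "\<And>J'. J' \<in> S \<Longrightarrow> card J' \<le> r" unfolding r_def using finS by (intro Max_ge) auto
  have Jsub: "J \<subseteq> {0..<n}" and Jind: "Fq_lin_indep q g J" using J by (auto simp: S_def)
  have finJ: "finite J" using Jsub finite_subset by blast
  obtain j1 where j1: "j1 < n" "g j1 \<noteq> 0" using gnz by blast
  have "{j1} \<in> S" using j1 by (auto simp: S_def Fq_lin_indep_def)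
  then have r1: "1 \<le> r" using rmax[of "{j1}"] by simp
  have "J \<noteq> {0..<n}" using nind Jind by blast
  then have "J \<subset> {0..<n}" using Jsub by blast
  then have rn: "r < n" using J(2) psubset_card_mono[of "{0..<n}" J] by simp
  have span: "\<forall>j\<in>{0..<n}. \<exists>lam. (\<forall>l\<in>J. lam l \<in> Fq) \<and> g j = (\<Sum>l\<in>J. lam l * g l)"
  proof
    fix j assume "j \<in> {0..<n}"
    then have j: "j < n" by simp
    show "\<exists>lam. (\<forall>l\<in>J. lam l \<in> Fq) \<and> g j = (\<Sum>l\<in>J. lam l * g l)"
    proof (cases "j \<in> J")
      case True
      have "(\<Sum>l\<in>J. (if l = j then 1 else 0) * g l) = (\<Sum>l\<in>J. if l = j then g l else 0)"
        by (intro sum.cong) auto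
      also have "\<dots> = g j" using True finJ by (simp add: sum.delta)
      finally show ?thesis
        by (intro exI[of _ "\<lambda>l. if l = j then 1 else 0"]) auto
    next
      case False
      have "card (insert j J) = Suc r" using False finJ J(2) by simp
      then have "insert j J \<notin> S" using rmax by fastforce
      then have "\<not> Fq_lin_indep q g (insert j J)" using Jsub j by (auto simp: S_def)
      then obtain c where c: "\<forall>l\<in>insert j J. c l \<in> Fq" "(\<Sum>l\<in>insert j J. c l * g l) = 0"
        "\<exists>l\<in>insert j J. c l \<noteq> 0"
        unfolding Fq_lin_indep_def by blast
      have sj: "c j * g j + (\<Sum>l\<in>J. c l * g l) = 0" using c(2) finJ False by simp
      have cj: "c j \<noteq> 0"
      proof
        assume cj0: "c j = 0"
        then have "(\<Sum>l\<in>J. c l * g l) = 0" using sj by simp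
        then have "\<forall>l\<in>J. c l = 0" using indepD[OF Jind, of c] c(1) by blast
        then show False using c(3) cj0 by blast
      qed
      have "(\<Sum>l\<in>J. (- c l / c j) * g l) = - (\<Sum>l\<in>J. c l * g l) / c j"
        by (simp add: sum_divide_distrib sum_negf)
      also have "\<dots> = g j"
      proof -
        have "c j * g j = - (\<Sum>l\<in>J. c l * g l)" using sj by (simp add: eq_neg_iff_add_eq_0)
        then show ?thesis using cj by (metis nonzero_mult_div_cancel_left)
      qed
      finally show ?thesis using c(1)
        by (intro exI[of _ "\<lambda>l. - c l / c j"]) (auto intro!: Fq_div Fq_neg)
    qed
  qed
  from bchoice[OF span] obtain Lam where Lam:
    "\<forall>j\<in>{0..<n}. (\<forall>l\<in>J. Lam j l \<in> Fq) \<and> g j = (\<Sum>l\<in>J. Lam j l * g l)" by blast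
  define t where "t = min k r"
  have t1: "1 \<le> t" "t \<le> r" "t \<le> k" using r1 k1 by (auto simp: t_def)
  obtain K where K: "K \<subseteq> J" "card K = t" "finite K"
    using obtain_subset_with_card_n[of t J] t1 J(2) by metis
  define xs where "xs = sorted_list_of_set K"
  have xs: "distinct xs" "set xs = K" "length xs = t" using K by (auto simp: xs_def)
  define \<kappa> where "\<kappa> = (\<lambda>p. xs ! p)"
  have bij: "bij_betw \<kappa> {..<t} K" unfolding \<kappa>_def using bij_betw_nth[OF xs(1)] xs by auto
  have injk: "inj_on \<kappa> {..<t}" using bij bij_betw_imp_inj_on by blast
  have kK: "\<And>p. p < t \<Longrightarrow> \<kappa> p \<in> K" using bij bij_betwE by blast
  have kn: "\<And>p. p < t \<Longrightarrow> \<kappa> p < n"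
  proof -
    fix p assume "p < t"
    then have "\<kappa> p \<in> {0..<n}" using kK K(1) Jsub by blast
    then show "\<kappa> p < n" by simp
  qed
  have Kind: "Fq_lin_indep q g K" using indep_subset[OF Jind K(1) finJ] .
  define A where "A i p = th i (g (\<kappa> p))" for i p
  have detA: "det (smat t A) \<noteq> 0"
  proof
    assume "det (smat t A) = 0"
    then obtain y where y: "\<exists>p<t. y p \<noteq> 0" "\<forall>i<t. (\<Sum>p<t. A i p * y p) = 0"
      using det_smat_zero_iff by blast
    define y' where "y' j = y (inv_into {..<t} \<kappa> j)" for j
    have y'k: "\<And>p. p < t \<Longrightarrow> y' (\<kappa> p) = y p" using injk by (simp add: y'_def inv_into_f_f)
    have "\<forall>i<t. (\<Sum>j\<in>K. y' j * th i (g j)) = 0"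
    proof (intro allI impI)
      fix i assume i: "i < t"
      have "(\<Sum>j\<in>K. y' j * th i (g j)) = (\<Sum>p<t. y' (\<kappa> p) * th i (g (\<kappa> p)))"
        using sum.reindex_bij_betw[OF bij, of "\<lambda>j. y' j * th i (g j)"] by simp
      also have "\<dots> = (\<Sum>p<t. A i p * y p)"
        by (intro sum.cong) (simp_all add: y'k A_def mult.commute)
      also have "\<dots> = 0" using y(2) i by simp
      finally show "(\<Sum>j\<in>K. y' j * th i (g j)) = 0" .
    qed
    then have "\<forall>j\<in>K. y' j = 0" using moore[OF K(3) Kind] K(2) by auto
    then show False using y(1) y'k kK by fastforce
  qed
  have detAT: "det (smat t (\<lambda>i p. A p i)) \<noteq> 0" using detA det_smat_transpose[of t A] by simp
  obtain u where u: "\<exists>i<t. u i \<noteq> 0" "\<forall>p<t. (\<Sum>i<t. (if p = 0 then 0 else A i p) * u i) = 0"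
    using kernel_exists[of 0 t "\<lambda>p i. if p = 0 then 0 else A i p"] t1 by auto
  have u0: "(\<Sum>i<t. A i p * u i) = 0" if "0 < p" "p < t" for p
    using u(2) that by auto
  define vv where "vv = vec n (\<lambda>j. \<Sum>i<t. u i * th i (g j))"
  have vvi: "\<And>j. j < n \<Longrightarrow> vv $ j = (\<Sum>i<t. u i * th i (g j))" by (simp add: vv_def)
  have "\<forall>j<n. (\<Sum>i\<in>{..<t}. u i * th i (g j)) = cw (\<lambda>l. \<Sum>i\<in>{..<t}. u i * B i l) $ j"
    by (rule cw_comb) (use rows t1 in auto)
  then have vv_cw: "vv = cw (\<lambda>l. \<Sum>i<t. u i * B i l)"
    by (intro eq_vecI) (auto simp: vv_def)
  have vvk: "vv $ \<kappa> p = (\<Sum>i<t. A i p * u i)" if "p < t" for p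
    using vvi[OF kn[OF that]] by (simp add: A_def mult.commute)
  have vvnz: "vv \<noteq> 0\<^sub>v n"
  proof
    assume vv0: "vv = 0\<^sub>v n"
    have "\<forall>p<t. (\<Sum>i<t. A i p * u i) = 0"
      using vvk vv0 kn by (metis index_zero_vec(1))
    then have "det (smat t (\<lambda>p i. A i p)) = 0" using det_smat_zero_iff u(1) by blast
    then show False using detAT by simp
  qed
  have lb: "n - k + 1 \<le> rank_q q vv" using mrd_cw[OF vv_cw vvnz] .
  define Z where "Z = \<kappa> ` {1..<t}"
  have ZK: "Z \<subseteq> K" unfolding Z_def using kK by auto
  have cardZ: "card Z = t - 1" unfolding Z_def
    by (subst card_image) (auto intro: inj_on_subset[OF injk])
  have vvZ: "vv $ l = 0" if lZ: "l \<in> Z" for l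
  proof -
    obtain p where p: "1 \<le> p" "p < t" "l = \<kappa> p" using lZ by (auto simp: Z_def)
    then show ?thesis using vvk[of p] u0[of p] by simp
  qed
  define L where "L = J - Z"
  have finL: "finite L" using finJ by (simp add: L_def)
  have vvspan: "vv $ j \<in> spanq ((\<lambda>l. vv $ l) ` L)" if "j < dim_vec vv" for j
  proof -
    have j: "j < n" using that by (simp add: vv_def)
    have Lj: "\<forall>l\<in>J. Lam j l \<in> Fq" "g j = (\<Sum>l\<in>J. Lam j l * g l)" using Lam j by auto
    have "vv $ j = (\<Sum>i<t. u i * th i (\<Sum>l\<in>J. Lam j l * g l))" using vvi[OF j] Lj(2) by simp
    also have "\<dots> = (\<Sum>i<t. u i * (\<Sum>l\<in>J. Lam j l * th i (g l)))"
      using th_comb[of J "Lam j"] Lj(1) by simp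
    also have "\<dots> = (\<Sum>i<t. \<Sum>l\<in>J. Lam j l * (u i * th i (g l)))"
      by (simp add: sum_distrib_left mult.left_commute)
    also have "\<dots> = (\<Sum>l\<in>J. \<Sum>i<t. Lam j l * (u i * th i (g l)))" by (rule sum.swap)
    also have "\<dots> = (\<Sum>l\<in>J. Lam j l * vv $ l)"
      using Jsub by (intro sum.cong refl) (auto simp: vvi sum_distrib_left)
    also have "\<dots> = (\<Sum>l\<in>L. Lam j l * vv $ l)"
      using finJ vvZ by (intro sum.mono_neutral_right) (auto simp: L_def)
    finally show ?thesis using span_image[OF finL, of "Lam j" "\<lambda>l. vv $ l"] Lj(1)
      by (auto simp: L_def)
  qed
  have "rank_q q vv \<le> card ((\<lambda>l. vv $ l) ` L)" by (rule rank_q_le) (use finL vvspan in auto)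
  also have "\<dots> \<le> card L" using finL by (rule card_image_le)
  also have "\<dots> = r - (t - 1)" unfolding L_def using card_Diff_subset[of Z J] ZK K(1) finJ J(2) cardZ
    by (metis finite_subset order_trans)
  finally have "n - k + 1 \<le> r - (t - 1)" using lb by linarith
  then show False using rn nk t1 unfolding t_def by (cases "k \<le> r") (auto simp: min_def)
qed

end

lemma mulvec2:
  fixes a b :: "'a::field vec"
  assumes "a \<in> carrier_vec k" "b \<in> carrier_vec k" "v \<in> carrier_vec 2" "l < k"
  shows "(mat_of_cols k [a, b] *\<^sub>v v) $ l = a $ l * v $ 0 + b $ l * v $ 1"
proof -
  have "(mat_of_cols k [a, b] *\<^sub>v v) $ l = (\<Sum>i\<in>{0..<2}. mat_of_cols k [a, b] $$ (l, i) * v $ i)"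
    using assms by (simp add: scalar_prod_def row_def)
  also have "\<dots> = mat_of_cols k [a, b] $$ (l, 0) * v $ 0 + mat_of_cols k [a, b] $$ (l, 1) * v $ 1"
    by (simp add: numeral_2_eq_2)
  also have "\<dots> = a $ l * v $ 0 + b $ l * v $ 1" using assms by (simp add: mat_of_cols_index)
  finally show ?thesis .
qed

lemma mulvec1:
  fixes a :: "'a::field vec"
  assumes "a \<in> carrier_vec k" "v \<in> carrier_vec 1" "l < k"
  shows "(mat_of_cols k [a] *\<^sub>v v) $ l = a $ l * v $ 0"
  using assms by (simp add: scalar_prod_def row_def mat_of_cols_index)

lemma rank_ge1:
  fixes D :: "'a::field mat"
  assumes D: "D \<in> carrier_mat k c" and l: "l < k" and j: "j < c" and nz: "D $$ (l, j) \<noteq> 0"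
  shows "1 \<le> vec_space.rank k D"
proof -
  interpret vec_space "TYPE('a)" k .
  let ?a = "col D j"
  have ac: "?a \<in> carrier_vec k" using D by auto
  define M1 where "M1 = mat_of_cols k [?a]"
  have M1c: "M1 \<in> carrier_mat k 1" unfolding M1_def using mat_of_cols_carrier(1)[of k "[?a]"] by simp
  have cM1: "cols M1 = [?a]" using ac by (simp add: M1_def)
  have "lin_indpt (set (cols M1))"
  proof
    assume "lin_dep (set (cols M1))"
    from lin_depE[OF M1c this] obtain v where v: "v \<in> carrier_vec 1" "v \<noteq> 0\<^sub>v 1" "M1 *\<^sub>v v = 0\<^sub>v k"
      using cM1 by auto
    have "v $ 0 \<noteq> 0"
    proof
      assume "v $ 0 = 0"
      then have "v = 0\<^sub>v 1" using v(1) by (intro eq_vecI) auto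
      then show False using v(2) by simp
    qed
    moreover have "(M1 *\<^sub>v v) $ l = ?a $ l * v $ 0" unfolding M1_def by (rule mulvec1[OF ac v(1) l])
    then have "?a $ l * v $ 0 = 0" using v(3) l by simp
    ultimately show False using nz D l j by simp
  qed
  moreover have "set (cols M1) \<subseteq> set (cols D)" using cM1 D j
    by (auto simp: in_set_conv_nth intro!: exI[of _ j])
  ultimately have "card (set (cols M1)) \<le> rank D" using rank_ge_card_indpt[OF D] by blast
  then show ?thesis using cM1 by simp
qed

lemma rank_le1_outer:
  fixes D :: "'a::field mat"
  assumes D: "D \<in> carrier_mat k c" and r: "vec_space.rank k D \<le> 1"
  shows "\<exists>f h. \<forall>l<k. \<forall>j<c. D $$ (l, j) = f l * h j"
proof (cases "\<forall>j<c. \<forall>l<k. D $$ (l, j) = 0")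
  case True then show ?thesis by (intro exI[of _ "\<lambda>_. 0"]) auto
next
  case False
  then obtain j0 l0 where j0: "j0 < c" "l0 < k" "D $$ (l0, j0) \<noteq> 0" by blast
  interpret vec_space "TYPE('a)" k .
  have propj: "\<exists>lam. \<forall>l<k. D $$ (l, j) = lam * D $$ (l, j0)" if j: "j < c" for j
  proof (rule ccontr)
    assume np: "\<not> (\<exists>lam. \<forall>l<k. D $$ (l, j) = lam * D $$ (l, j0))"
    let ?a = "col D j0" and ?b = "col D j"
    have ac: "?a \<in> carrier_vec k" "?b \<in> carrier_vec k" using D by auto
    have ab: "?a \<noteq> ?b"
    proof
      assume "?a = ?b"
      then have "\<forall>l<k. D $$ (l, j) = 1 * D $$ (l, j0)"
        using D j j0 by (metis carrier_matD(1) carrier_matD(2) col_def index_vec mult_1)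
      then show False using np by blast
    qed
    define M2 where "M2 = mat_of_cols k [?a, ?b]"
    have M2c: "M2 \<in> carrier_mat k 2" unfolding M2_def using mat_of_cols_carrier(1)[of k "[?a, ?b]"] by (simp add: numeral_2_eq_2)
    have cM2: "cols M2 = [?a, ?b]" using ac by (simp add: M2_def)
    have "lin_indpt (set (cols M2))"
    proof
      assume "lin_dep (set (cols M2))"
      from lin_depE[OF M2c this] obtain v where v: "v \<in> carrier_vec 2" "v \<noteq> 0\<^sub>v 2" "M2 *\<^sub>v v = 0\<^sub>v k"
        using cM2 ab by auto
      have eq: "D $$ (l, j0) * v $ 0 + D $$ (l, j) * v $ 1 = 0" if l: "l < k" for l
      proof -
        have "(M2 *\<^sub>v v) $ l = ?a $ l * v $ 0 + ?b $ l * v $ 1"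
          unfolding M2_def by (rule mulvec2[OF ac v(1) l])
        then show ?thesis using v(3) l D j j0 by simp
      qed
      show False
      proof (cases "v $ 1 = 0")
        case True
        have "v $ 0 \<noteq> 0"
        proof
          assume "v $ 0 = 0"
          then have "v = 0\<^sub>v 2" using v(1) True by (intro eq_vecI) (auto simp: less_2_cases_iff)
          then show False using v(2) by simp
        qed
        then show False using eq[OF j0(2)] True j0(3) by simp
      next
        case False
        have "\<forall>l<k. D $$ (l, j) = (- v $ 0 / v $ 1) * D $$ (l, j0)"
        proof (intro allI impI)
          fix l assume "l < k"
          from eq[OF this] have "D $$ (l, j) * v $ 1 = - (D $$ (l, j0) * v $ 0)"
            by (simp add: eq_neg_iff_add_eq_0 add.commute)
          then show "D $$ (l, j) = (- v $ 0 / v $ 1) * D $$ (l, j0)"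
            using False by (simp add: field_simps)
        qed
        then show False using np by blast
      qed
    qed
    moreover have "set (cols M2) \<subseteq> set (cols D)" using cM2 D j j0
      by (auto simp: in_set_conv_nth)
    ultimately have "card (set (cols M2)) \<le> rank D" using rank_ge_card_indpt[OF D] by blast
    then show False using cM2 ab r by simp
  qed
  have "\<forall>j\<in>{..<c}. \<exists>lam. \<forall>l<k. D $$ (l, j) = lam * D $$ (l, j0)" using propj by blast
  from bchoice[OF this] obtain Lam where Lam: "\<forall>j\<in>{..<c}. \<forall>l<k. D $$ (l, j) = Lam j * D $$ (l, j0)"
    by blast
  show ?thesis
    by (intro exI[of _ "\<lambda>l. D $$ (l, j0)"] exI[of _ Lam]) (use Lam in \<open>auto simp: mult.commute\<close>)
qed

context CODE begin

lemma D_carrier: "frob_mat (q ^ s) X - X \<in> carrier_mat k (n - k)"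
  using X_dim by (auto simp: frob_mat_def)

lemma D_index: "l < k \<Longrightarrow> j < n - k \<Longrightarrow>
   (frob_mat (q ^ s) X - X) $$ (l, j) = th 1 (X $$ (l, j)) - X $$ (l, j)"
  using X_dim by (auto simp: frob_mat_def th_def)

lemma cw_cong: "(\<And>l. l < k \<Longrightarrow> a l = b l) \<Longrightarrow> cw a = cw b"
  unfolding cw_def by (intro eq_vecI) auto

lemma gab_rs: "row_space (gab_mat q s k n g) = {vec n (\<lambda>j. \<Sum>i<k. c i * th i (g j)) | c. True}"
proof -
  have "vec n (\<lambda>j. \<Sum>i<k. c i * gab_mat q s k n g $$ (i, j)) = vec n (\<lambda>j. \<Sum>i<k. c i * th i (g j))" for c
    by (intro eq_vecI) (auto simp: gab_mat_def th_def)
  then show ?thesis unfolding row_space_def by (auto simp: gab_mat_def)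
qed

lemma gab_if:
  assumes r: "vec_space.rank k (frob_mat (q ^ s) X - X) \<le> 1"
  shows "is_gen_gabidulin q s k n (row_space (sys_gen k n X))"
proof -
  obtain f h where fh: "\<forall>l<k. \<forall>j<n - k. (frob_mat (q ^ s) X - X) $$ (l, j) = f l * h j"
    using rank_le1_outer[OF D_carrier r] by blast
  have Dfh: "th 1 (X $$ (l, j)) = X $$ (l, j) + f l * h j" if "l < k" "j < n - k" for l j
    using fh D_index[OF that] that by (metis diff_add_cancel add.commute)
  define M where "M i l = (if i = 0 then 0 else f l ^ (q ^ (s * i * (m - 1))))" for i l
  obtain a where a: "\<exists>l<k. a l \<noteq> 0" "\<forall>i<k. (\<Sum>l<k. M i l * a l) = 0"
    using kernel_exists[of 0 k M] k1 by (auto simp: M_def)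
  have aeq: "(\<Sum>l<k. th i (a l) * f l) = 0" if "0 < i" "i < k" for i
  proof -
    have "(\<Sum>l<k. f l ^ (q ^ (s * i * (m - 1))) * a l) = 0" using a(2)[rule_format, of i] that by (simp add: M_def)
    then have "th i (\<Sum>l<k. f l ^ (q ^ (s * i * (m - 1))) * a l) = 0" by simp
    then have "(\<Sum>l<k. f l * th i (a l)) = 0" by (simp add: th_sum th_mult th_inv[unfolded One_nat_def])
    then show ?thesis by (simp add: mult.commute)
  qed
  have key: "th i (\<Sum>l<k. a l * X $$ (l, j)) = (\<Sum>l<k. th i (a l) * X $$ (l, j))"
    if "i < k" "j < n - k" for i j
    using that(1)
  proof (induction i)
    case 0 then show ?case by simp
  next
    case (Suc i)
    have "th (Suc i) (\<Sum>l<k. a l * X $$ (l, j)) = th 1 (th i (\<Sum>l<k. a l * X $$ (l, j)))"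
      by (simp add: th_th)
    also have "\<dots> = th 1 (\<Sum>l<k. th i (a l) * X $$ (l, j))" using Suc by simp
    also have "\<dots> = (\<Sum>l<k. th (Suc i) (a l) * th 1 (X $$ (l, j)))"
      by (simp add: th_sum th_mult th_th)
    also have "\<dots> = (\<Sum>l<k. th (Suc i) (a l) * X $$ (l, j) + h j * (th (Suc i) (a l) * f l))"
    proof (intro sum.cong refl)
      fix l assume "l \<in> {..<k}"
      then have e: "th 1 (X $$ (l, j)) = X $$ (l, j) + f l * h j" using Dfh that(2) by simp
      show "th (Suc i) (a l) * th 1 (X $$ (l, j)) =
          th (Suc i) (a l) * X $$ (l, j) + h j * (th (Suc i) (a l) * f l)"
        by (subst e) (simp add: algebra_simps)
    qed
    also have "\<dots> = (\<Sum>l<k. th (Suc i) (a l) * X $$ (l, j)) + h j * (\<Sum>l<k. th (Suc i) (a l) * f l)"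
      by (simp add: sum.distrib sum_distrib_left)
    also have "\<dots> = (\<Sum>l<k. th (Suc i) (a l) * X $$ (l, j))" using aeq[of "Suc i"] Suc by simp
    finally show ?case .
  qed
  define g where "g j = (if j < k then a j else (\<Sum>l<k. a l * X $$ (l, j - k)))" for j
  have rows: "\<forall>j<n. th i (g j) = cw (\<lambda>l. th i (a l)) $ j" if i: "i < k" for i
  proof (intro allI impI)
    fix j assume j: "j < n"
    show "th i (g j) = cw (\<lambda>l. th i (a l)) $ j"
    proof (cases "j < k")
      case True then show ?thesis using j by (simp add: g_def cw_index)
    next
      case False
      then have "j - k < n - k" using j by simp
      then show ?thesis using j False key[OF i] by (simp add: g_def cw_index)
    qed
  qed
  have gnz: "\<exists>j<n. g j \<noteq> 0" using a(1) nk by (auto simp: g_def)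
  have gind: "Fq_lin_indep q g {0..<n}" by (rule moore_indep[OF rows gnz])
  have gk: "g l = a l" if "l < k" for l using that by (simp add: g_def)
  define A where "A i l = th i (a l)" for i l
  have indk: "Fq_lin_indep q g {0..<k}" using indep_subset[OF gind] nk by auto
  have detA: "det (smat k A) \<noteq> 0"
  proof
    assume "det (smat k A) = 0"
    then obtain y where y: "\<exists>p<k. y p \<noteq> 0" "\<forall>i<k. (\<Sum>p<k. A i p * y p) = 0"
      using det_smat_zero_iff by blast
    have "\<forall>i<k. (\<Sum>j\<in>{0..<k}. y j * th i (g j)) = 0"
    proof (intro allI impI)
      fix i assume i: "i < k"
      have "(\<Sum>j\<in>{0..<k}. y j * th i (g j)) = (\<Sum>p<k. A i p * y p)"
        by (simp add: lessThan_atLeast0 A_def gk mult.commute)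
      then show "(\<Sum>j\<in>{0..<k}. y j * th i (g j)) = 0" using y(2) i by simp
    qed
    then have "\<forall>j\<in>{0..<k}. y j = 0"
      by (intro moore[OF _ indk, where t=k]) auto
    then show False using y(1) by auto
  qed
  have detAT: "det (smat k (\<lambda>l i. A i l)) \<noteq> 0" using detA det_smat_transpose[of k A] by simp
  have "row_space (sys_gen k n X) = row_space (gab_mat q s k n g)"
  proof
    show "row_space (gab_mat q s k n g) \<subseteq> row_space (sys_gen k n X)"
    proof
      fix v assume "v \<in> row_space (gab_mat q s k n g)"
      then obtain c where c: "v = vec n (\<lambda>j. \<Sum>i<k. c i * th i (g j))" by (auto simp: gab_rs)
      have "\<forall>j<n. (\<Sum>i\<in>{..<k}. c i * th i (g j)) = cw (\<lambda>l. \<Sum>i\<in>{..<k}. c i * th (i) (a l)) $ j"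
        by (rule cw_comb) (use rows in auto)
      then have "v = cw (\<lambda>l. \<Sum>i<k. c i * th i (a l))" unfolding c by (intro eq_vecI) auto
      then show "v \<in> row_space (sys_gen k n X)" unfolding C_eq by simp
    qed
  next
    show "row_space (sys_gen k n X) \<subseteq> row_space (gab_mat q s k n g)"
    proof
      fix v assume "v \<in> row_space (sys_gen k n X)"
      then obtain w where w: "v = cw w" unfolding C_eq by auto
      obtain u where u: "\<forall>l<k. (\<Sum>i<k. A i l * u i) = w l"
        using solve_exists[OF detAT] by blast
      have "\<forall>j<n. (\<Sum>i\<in>{..<k}. u i * th i (g j)) = cw (\<lambda>l. \<Sum>i\<in>{..<k}. u i * th (i) (a l)) $ j"
        by (rule cw_comb) (use rows in auto)
      moreover have "cw (\<lambda>l. \<Sum>i<k. u i * th i (a l)) = cw w"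
        using u by (intro cw_cong) (simp add: A_def mult.commute)
      ultimately have "v = vec n (\<lambda>j. \<Sum>i<k. u i * th i (g j))" unfolding w by (intro eq_vecI) auto
      then show "v \<in> row_space (gab_mat q s k n g)" unfolding gab_rs by blast
    qed
  qed
  then show ?thesis unfolding is_gen_gabidulin_def using gind by blast
qed

end

context CODE begin
lemma in_gab: "vec n (\<lambda>j. \<Sum>i<k. c i * th i (g j)) \<in> row_space (gab_mat q s k n g)"
  unfolding gab_rs by blast

lemma in_spanq: "(\<And>b. b \<in> B \<Longrightarrow> d b \<in> Fq) \<Longrightarrow> (\<Sum>b\<in>B. d b * b) \<in> spanq B"
  unfolding spanq_def by blast

lemma gab_only_if:
  assumes G: "is_gen_gabidulin q s k n (row_space (sys_gen k n X))"
  shows "vec_space.rank k (frob_mat (q ^ s) X - X) = 1"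
proof -
  let ?D = "frob_mat (q ^ s) X - X"
  obtain g where gind: "Fq_lin_indep q g {0..<n}"
    and CG: "row_space (sys_gen k n X) = row_space (gab_mat q s k n g)"
    using G unfolding is_gen_gabidulin_def by blast
  have CG': "range cw = {vec n (\<lambda>j. \<Sum>i<k. c i * th i (g j)) | c. True}"
    using CG C_eq gab_rs by simp
  have R: "th i (g (k + j)) = (\<Sum>l<k. th i (g l) * X $$ (l, j))" if ij: "i < k" "j < n - k" for i j
  proof -
    have "vec n (\<lambda>j. \<Sum>i'<k. (if i' = i then 1 else 0) * th i' (g j)) \<in> range cw"
      using in_gab[of "\<lambda>i'. if i' = i then 1 else 0" g] CG C_eq by simp
    then obtain b where b: "vec n (\<lambda>j. \<Sum>i'<k. (if i' = i then 1 else 0) * th i' (g j)) = cw b" by auto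
    have ent: "th i (g j') = cw b $ j'" if "j' < n" for j'
    proof -
      have "(\<Sum>i'<k. (if i' = i then 1 else 0) * th i' (g j')) = (\<Sum>i'<k. if i' = i then th i' (g j') else 0)"
        by (intro sum.cong) auto
      also have "\<dots> = th i (g j')" using ij by (simp add: sum.delta)
      moreover have "cw b $ j' = (\<Sum>i'<k. (if i' = i then 1 else 0) * th i' (g j'))"
        using b[symmetric] that by simp
      ultimately show ?thesis by simp
    qed
    have bl: "b l = th i (g l)" if "l < k" for l using ent[of l] that nk by (simp add: cw_index)
    have "th i (g (k + j)) = cw b $ (k + j)" using ent ij by simp
    also have "\<dots> = (\<Sum>l<k. b l * X $$ (l, j))" using ij by (simp add: cw_index)
    also have "\<dots> = (\<Sum>l<k. th i (g l) * X $$ (l, j))" using bl by simp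
    finally show ?thesis .
  qed
  have U: "\<forall>r\<in>{..<k}. \<exists>c. \<forall>l<k. (if l = r then 1 else 0) = (\<Sum>i<k. c i * th i (g l))"
  proof
    fix r assume "r \<in> {..<k}"
    have "cw (\<lambda>l. if l = r then 1 else 0) \<in> range cw" by simp
    then obtain c where c: "cw (\<lambda>l. if l = r then 1 else 0) = vec n (\<lambda>j. \<Sum>i<k. c i * th i (g j))"
      unfolding CG' by auto
    have "\<forall>l<k. (if l = r then 1 else 0) = (\<Sum>i<k. c i * th i (g l))"
    proof (intro allI impI)
      fix l assume l: "l < k"
      have "cw (\<lambda>l. if l = r then 1 else 0) $ l = vec n (\<lambda>j. \<Sum>i<k. c i * th i (g j)) $ l" using c by simp
      then show "(if l = r then 1 else 0) = (\<Sum>i<k. c i * th i (g l))" using l nk by (simp add: cw_index)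
    qed
    then show "\<exists>c. \<forall>l<k. (if l = r then 1 else 0) = (\<Sum>i<k. c i * th i (g l))" by blast
  qed
  from bchoice[OF U] obtain Cm where Cm:
    "\<forall>r\<in>{..<k}. \<forall>l<k. (if l = r then 1 else 0) = (\<Sum>i<k. Cm r i * th i (g l))" by blast
  define E where "E i j = (\<Sum>l<k. th (Suc i) (g l) * ?D $$ (l, j))" for i j
  have E0: "E i j = 0" if ij: "i < k - 1" "j < n - k" for i j
  proof -
    have "E i j = (\<Sum>l<k. th 1 (th i (g l) * X $$ (l, j)) - th (Suc i) (g l) * X $$ (l, j))"
      unfolding E_def using ij by (intro sum.cong refl) (simp add: D_index th_mult th_th right_diff_distrib)
    also have "\<dots> = th 1 (\<Sum>l<k. th i (g l) * X $$ (l, j)) - (\<Sum>l<k. th (Suc i) (g l) * X $$ (l, j))"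
      by (simp add: sum_subtractf th_sum)
    also have "\<dots> = th 1 (th i (g (k + j))) - th (Suc i) (g (k + j))"
      using R[of i j] R[of "Suc i" j] ij by simp
    also have "\<dots> = 0" by (simp add: th_th)
    finally show ?thesis .
  qed
  have Dform: "?D $$ (r, j) = th 1 (Cm r (k - 1)) * E (k - 1) j" if rj: "r < k" "j < n - k" for r j
  proof -
    have "?D $$ (r, j) = (\<Sum>l<k. (if l = r then 1 else 0) * ?D $$ (l, j))"
    proof -
      have "(\<Sum>l<k. (if l = r then 1 else 0) * ?D $$ (l, j)) = (\<Sum>l<k. if l = r then ?D $$ (l, j) else 0)"
        by (intro sum.cong) auto
      also have "\<dots> = ?D $$ (r, j)" using rj by (simp add: sum.delta)
      finally show ?thesis by simp
    qed
    also have "\<dots> = (\<Sum>l<k. th 1 (\<Sum>i<k. Cm r i * th i (g l)) * ?D $$ (l, j))"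
    proof (intro sum.cong refl)
      fix l assume "l \<in> {..<k}"
      then have "(\<Sum>i<k. Cm r i * th i (g l)) = (if l = r then 1 else 0)" using Cm rj by auto
      then have "th 1 (\<Sum>i<k. Cm r i * th i (g l)) = (if l = r then 1 else 0)"
        by (cases "l = r") simp_all
      then show "(if l = r then 1 else 0) * ?D $$ (l, j) = th 1 (\<Sum>i<k. Cm r i * th i (g l)) * ?D $$ (l, j)"
        by simp
    qed
    also have "\<dots> = (\<Sum>l<k. \<Sum>i<k. th 1 (Cm r i) * (th (Suc i) (g l) * ?D $$ (l, j)))"
      by (simp add: th_sum th_mult th_th sum_distrib_right mult.assoc)
    also have "\<dots> = (\<Sum>i<k. \<Sum>l<k. th 1 (Cm r i) * (th (Suc i) (g l) * ?D $$ (l, j)))" by (rule sum.swap)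
    also have "\<dots> = (\<Sum>i<k. th 1 (Cm r i) * E i j)" by (simp add: E_def sum_distrib_left)
    also have "\<dots> = (\<Sum>i\<in>insert (k - 1) {..<k - 1}. th 1 (Cm r i) * E i j)"
    proof -
      have "{..<k} = insert (k - 1) {..<k - 1}" using k1 by auto
      then show ?thesis by simp
    qed
    also have "\<dots> = th 1 (Cm r (k - 1)) * E (k - 1) j + (\<Sum>i<k - 1. th 1 (Cm r i) * E i j)"
      by simp
    also have "(\<Sum>i<k - 1. th 1 (Cm r i) * E i j) = 0" using E0 rj by simp
    finally show ?thesis by simp
  qed
  have dims: "dim_row ?D = k" "dim_col ?D = n - k" using D_carrier by auto
  have le1: "vec_space.rank k ?D \<le> 1"
  proof (rule vec_space.rank_le_1_product_entries[OF D_carrier,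
          where f = "\<lambda>r. th 1 (Cm r (k - 1))" and g = "\<lambda>j. E (k - 1) j"])
    fix r c assume "r < dim_row ?D" "c < dim_col ?D"
    then have "r < k" "c < n - k" using dims by simp_all
    then show "?D $$ (r, c) = th 1 (Cm r (k - 1)) * E (k - 1) c" by (rule Dform)
  qed
  have "\<exists>l j. l < k \<and> j < n - k \<and> ?D $$ (l, j) \<noteq> 0"
  proof (rule ccontr)
    assume nex: "\<not> ?thesis"
    have Xfix: "X $$ (l, j) \<in> Fq" if lj: "l < k" "j < n - k" for l j
    proof -
      have "?D $$ (l, j) = 0" using nex lj by blast
      then have "th 1 (X $$ (l, j)) = X $$ (l, j)" using D_index[OF lj] by simp
      then show ?thesis by (rule th_fixed)
    qed
    define v where "v = cw (\<lambda>l. if l = 0 then 1 else 0)"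
    have "v $ 0 = 1" using k1 nk by (simp add: v_def cw_index)
    then have vnz: "v \<noteq> 0\<^sub>v n" using nk by auto
    have "v $ j \<in> spanq {1}" if "j < dim_vec v" for j
    proof -
      have j: "j < n" using that by (simp add: v_def)
      have "v $ j \<in> Fq"
      proof (cases "j < k")
        case True then show ?thesis using j by (simp add: v_def cw_index)
      next
        case False
        have "v $ j = (\<Sum>l<k. (if l = 0 then 1 else 0) * X $$ (l, j - k))"
          using j False by (simp add: v_def cw_index)
        also have "\<dots> = (\<Sum>l<k. if l = 0 then X $$ (l, j - k) else 0)" by (intro sum.cong) auto
        also have "\<dots> = X $$ (0, j - k)" using k1 by (simp add: sum.delta)
        finally show ?thesis using Xfix[of 0 "j - k"] k1 j False by simp
      qed
      then have "(\<Sum>b\<in>{1}. (\<lambda>_. v $ j) b * b) \<in> spanq {1}" by (intro in_spanq) simp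
      then show ?thesis by simp
    qed
    then have "rank_q q v \<le> card {1::'a}" by (intro rank_q_le) auto
    moreover have "n - k + 1 \<le> rank_q q v" using mrd_cw[OF v_def vnz] .
    ultimately show False using nk by simp
  qed
  then obtain l j where lj: "l < k" "j < n - k" "?D $$ (l, j) \<noteq> 0" by blast
  have "1 \<le> vec_space.rank k ?D" by (rule rank_ge1[OF D_carrier lj])
  with le1 show ?thesis by simp
qed

end

theorem lemma3p3:
  fixes q m n k s :: nat and X :: "'a::{field,finite} mat"
  assumes q_pp: "\<exists>p e. prime p \<and> e \<ge> 1 \<and> q = p ^ e"
    and card_F: "card (UNIV :: 'a set) = q ^ m"
    and m2: "m \<ge> 2"
    and k1: "1 \<le> k" and kn: "k \<le> n - 1"
    and X_dim: "X \<in> carrier_mat k (n - k)"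
    and MRD: "min_rank_dist q (row_space (sys_gen k n X)) = n - k + 1"
    and s_pos: "0 < s" and s_lt: "s < m" and s_cop: "coprime s m"
  shows "is_gen_gabidulin q s k n (row_space (sys_gen k n X))
           \<longleftrightarrow> vec_space.rank k (frob_mat (q ^ s) X - X) = 1"
proof -
  interpret CODE "TYPE('a)" q m s k n X
    by unfold_locales (use assms in auto)
  show ?thesis
  proof
    assume "is_gen_gabidulin q s k n (row_space (sys_gen k n X))"
    then show "vec_space.rank k (frob_mat (q ^ s) X - X) = 1" by (rule gab_only_if)
  next
    assume "vec_space.rank k (frob_mat (q ^ s) X - X) = 1"
    then have "vec_space.rank k (frob_mat (q ^ s) X - X) \<le> 1" by simp
    then show "is_gen_gabidulin q s k n (row_space (sys_gen k n X))" by (rule gab_if)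
  qed
qed

end
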